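(* Let $\mathscr{A}$ be a unital Banach algebra, $\mathscr{B},\mathscr{C}$ unital Banach algebras, and $\varphi:\mathscr{A}\to\mathscr{B}$, $\psi:\mathscr{A}\to\mathscr{C}$ algebra homomorphisms. The following are equivalent: (i) every bounded Jordan $(\varphi,\psi)$-derivation from $\mathscr{A}$ into any unital Banach $\mathscr{B}$-$\mathscr{C}$-bimodule is a $(\varphi,\psi)$-derivation; (ii) every bounded trilinear form $V:\mathscr{A}\times\mathscr{C}\times\mathscr{B}\to\mathbb{C}$ satisfying $$V(a^{2},c,b)=V(a,\psi(a)c,b)+V(a,c,b\varphi(a))\quad(a\in\mathscr{A},b\in\mathscr{B},c\in\mathscr{C})$$ also satisfies $$V(ad,c,b)=V(a,\psi(d)c,b)+V(d,c,b\varphi(a))\quad(a,d\in\mathscr{A},b\in\mathscr{B},c\in\mathscr{C}).$$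
   Context: A Banach $\mathscr{B}$-$\mathscr{C}$-bimodule is a Banach space $X$ that is a left Banach $\mathscr{B}$-module and a right Banach $\mathscr{C}$-module with commuting actions and $\|b\cdot x\cdot c\|\le\|b\|\|x\|\|c\|$; it is unital if the units of $\mathscr{B},\mathscr{C}$ act as the identity. A linear map $\delta:\mathscr{A}\to X$ is a Jordan $(\varphi,\psi)$-derivation if $\delta(a^{2})=\varphi(a)\cdot\delta(a)+\delta(a)\cdot\psi(a)$ for all $a$, and a $(\varphi,\psi)$-derivation if $\delta(ab)=\delta(a)\cdot\psi(b)+\varphi(a)\cdot\delta(b)$ for all $a,b$. *)

theory Defs
  imports "HOL-Analysis.Analysis"
begin

class complex_vector = real_vector +
  fixes scaleC :: "complex \<Rightarrow> 'a \<Rightarrow> 'a"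
  assumes scaleC_add_right: "scaleC z (x + y) = scaleC z x + scaleC z y"
    and scaleC_add_left: "scaleC (z + w) x = scaleC z x + scaleC w x"
    and scaleC_scaleC: "scaleC z (scaleC w x) = scaleC (z * w) x"
    and scaleC_one: "scaleC 1 x = x"
    and scaleR_scaleC: "scaleR r x = scaleC (complex_of_real r) x"

class complex_normed_vector = complex_vector + real_normed_vector +
  assumes norm_scaleC: "norm (scaleC z x) = cmod z * norm x"

class complex_algebra = complex_vector + ring +
  assumes mult_scaleC_left: "scaleC z x * y = scaleC z (x * y)"
    and mult_scaleC_right: "x * scaleC z y = scaleC z (x * y)"

class complex_banach_algebra_1 =
  complex_normed_vector + complex_algebra + real_normed_algebra_1 + banach

definition alg_hom :: "('a::complex_algebra \<Rightarrow> 'b::complex_algebra) \<Rightarrow> bool" where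
  "alg_hom f \<longleftrightarrow> (\<forall>x y. f (x + y) = f x + f y) \<and>
                  (\<forall>z x. f (scaleC z x) = scaleC z (f x)) \<and>
                  (\<forall>x y. f (x * y) = f x * f y)"

definition bounded_trilinear_form ::
    "('a::complex_normed_vector \<Rightarrow> 'c::complex_normed_vector \<Rightarrow> 'b::complex_normed_vector \<Rightarrow> complex) \<Rightarrow> bool" where
  "bounded_trilinear_form V \<longleftrightarrow>
     (\<forall>a a' c b. V (a + a') c b = V a c b + V a' c b) \<and>
     (\<forall>z a c b. V (scaleC z a) c b = z * V a c b) \<and>
     (\<forall>a c c' b. V a (c + c') b = V a c b + V a c' b) \<and>
     (\<forall>z a c b. V a (scaleC z c) b = z * V a c b) \<and>
     (\<forall>a c b b'. V a c (b + b') = V a c b + V a c b') \<and>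
     (\<forall>z a c b. V a c (scaleC z b) = z * V a c b) \<and>
     (\<exists>K. \<forall>a c b. cmod (V a c b) \<le> K * norm a * norm c * norm b)"

text \<open>A Banach space is given by a carrier set inside some type together with
  its operations; a B-C-bimodule additionally carries a left B-action and a
  right C-action.\<close>

record ('b, 'c, 'x) bimod =
  bm_carrier :: "'x set"
  bm_zero :: 'x
  bm_add :: "'x \<Rightarrow> 'x \<Rightarrow> 'x"
  bm_smul :: "complex \<Rightarrow> 'x \<Rightarrow> 'x"
  bm_norm :: "'x \<Rightarrow> real"
  bm_lact :: "'b \<Rightarrow> 'x \<Rightarrow> 'x"
  bm_ract :: "'x \<Rightarrow> 'c \<Rightarrow> 'x"

definition complex_banach_space :: "('b, 'c, 'x) bimod \<Rightarrow> bool" where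
  "complex_banach_space M \<longleftrightarrow>
    (let X = bm_carrier M; z0 = bm_zero M; ad = bm_add M; sm = bm_smul M; nm = bm_norm M in
     z0 \<in> X \<and>
     (\<forall>x\<in>X. \<forall>y\<in>X. ad x y \<in> X) \<and>
     (\<forall>z. \<forall>x\<in>X. sm z x \<in> X) \<and>
     (\<forall>x\<in>X. \<forall>y\<in>X. \<forall>w\<in>X. ad (ad x y) w = ad x (ad y w)) \<and>
     (\<forall>x\<in>X. \<forall>y\<in>X. ad x y = ad y x) \<and>
     (\<forall>x\<in>X. ad z0 x = x) \<and>
     (\<forall>x\<in>X. \<exists>y\<in>X. ad x y = z0) \<and>
     (\<forall>z. \<forall>x\<in>X. \<forall>y\<in>X. sm z (ad x y) = ad (sm z x) (sm z y)) \<and>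
     (\<forall>z w. \<forall>x\<in>X. sm (z + w) x = ad (sm z x) (sm w x)) \<and>
     (\<forall>z w. \<forall>x\<in>X. sm z (sm w x) = sm (z * w) x) \<and>
     (\<forall>x\<in>X. sm 1 x = x) \<and>
     (\<forall>x\<in>X. nm x = 0 \<longleftrightarrow> x = z0) \<and>
     (\<forall>x\<in>X. \<forall>y\<in>X. nm (ad x y) \<le> nm x + nm y) \<and>
     (\<forall>z. \<forall>x\<in>X. nm (sm z x) = cmod z * nm x) \<and>
     (\<forall>s :: nat \<Rightarrow> 'x. (\<forall>n. s n \<in> X) \<longrightarrow>
          (\<forall>e>0. \<exists>N::nat. \<forall>m\<ge>N. \<forall>n\<ge>N. nm (ad (s m) (sm (-1) (s n))) < e) \<longrightarrow>
          (\<exists>l\<in>X. \<forall>e>0. \<exists>N::nat. \<forall>n\<ge>N. nm (ad (s n) (sm (-1) l)) < e)))"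

definition unital_banach_bimodule ::
    "('b::complex_banach_algebra_1, 'c::complex_banach_algebra_1, 'x) bimod \<Rightarrow> bool" where
  "unital_banach_bimodule M \<longleftrightarrow> complex_banach_space M \<and>
    (let X = bm_carrier M; ad = bm_add M; sm = bm_smul M; nm = bm_norm M;
         l = bm_lact M; r = bm_ract M in
     (\<forall>b. \<forall>x\<in>X. l b x \<in> X) \<and>
     (\<forall>c. \<forall>x\<in>X. r x c \<in> X) \<and>
     (\<forall>b. \<forall>x\<in>X. \<forall>y\<in>X. l b (ad x y) = ad (l b x) (l b y)) \<and>
     (\<forall>b b'. \<forall>x\<in>X. l (b + b') x = ad (l b x) (l b' x)) \<and>
     (\<forall>z b. \<forall>x\<in>X. l (scaleC z b) x = sm z (l b x)) \<and>
     (\<forall>z b. \<forall>x\<in>X. l b (sm z x) = sm z (l b x)) \<and>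
     (\<forall>b b'. \<forall>x\<in>X. l (b * b') x = l b (l b' x)) \<and>
     (\<forall>x\<in>X. l 1 x = x) \<and>
     (\<forall>c. \<forall>x\<in>X. \<forall>y\<in>X. r (ad x y) c = ad (r x c) (r y c)) \<and>
     (\<forall>c c'. \<forall>x\<in>X. r x (c + c') = ad (r x c) (r x c')) \<and>
     (\<forall>z c. \<forall>x\<in>X. r x (scaleC z c) = sm z (r x c)) \<and>
     (\<forall>z c. \<forall>x\<in>X. r (sm z x) c = sm z (r x c)) \<and>
     (\<forall>c c'. \<forall>x\<in>X. r x (c * c') = r (r x c) c') \<and>
     (\<forall>x\<in>X. r x 1 = x) \<and>
     (\<forall>b c. \<forall>x\<in>X. l b (r x c) = r (l b x) c) \<and>
     (\<forall>b. \<forall>x\<in>X. nm (l b x) \<le> norm b * nm x) \<and>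
     (\<forall>c. \<forall>x\<in>X. nm (r x c) \<le> nm x * norm c) \<and>
     (\<forall>b c. \<forall>x\<in>X. nm (l b (r x c)) \<le> norm b * nm x * norm c))"

definition bounded_linear_into ::
    "('b, 'c, 'x) bimod \<Rightarrow> ('a::complex_normed_vector \<Rightarrow> 'x) \<Rightarrow> bool" where
  "bounded_linear_into M \<delta> \<longleftrightarrow>
     (\<forall>a. \<delta> a \<in> bm_carrier M) \<and>
     (\<forall>a a'. \<delta> (a + a') = bm_add M (\<delta> a) (\<delta> a')) \<and>
     (\<forall>z a. \<delta> (scaleC z a) = bm_smul M z (\<delta> a)) \<and>
     (\<exists>K. \<forall>a. bm_norm M (\<delta> a) \<le> K * norm a)"

definition jordan_derivation ::
    "('b, 'c, 'x) bimod \<Rightarrow> ('a::ring \<Rightarrow> 'b) \<Rightarrow> ('a \<Rightarrow> 'c) \<Rightarrow> ('a \<Rightarrow> 'x) \<Rightarrow> bool" where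
  "jordan_derivation M \<phi> \<psi> \<delta> \<longleftrightarrow>
     (\<forall>a. \<delta> (a * a) = bm_add M (bm_lact M (\<phi> a) (\<delta> a)) (bm_ract M (\<delta> a) (\<psi> a)))"

definition derivation ::
    "('b, 'c, 'x) bimod \<Rightarrow> ('a::ring \<Rightarrow> 'b) \<Rightarrow> ('a \<Rightarrow> 'c) \<Rightarrow> ('a \<Rightarrow> 'x) \<Rightarrow> bool" where
  "derivation M \<phi> \<psi> \<delta> \<longleftrightarrow>
     (\<forall>a d. \<delta> (a * d) = bm_add M (bm_ract M (\<delta> a) (\<psi> d)) (bm_lact M (\<phi> a) (\<delta> d)))"

text \<open>Condition (i), restricted to bimodules whose elements live in the type 'x.
  Quantifying over all types is done at the theorem level (free type variable).\<close>
definition cond_i ::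
    "('a::complex_banach_algebra_1 \<Rightarrow> 'b::complex_banach_algebra_1) \<Rightarrow>
     ('a \<Rightarrow> 'c::complex_banach_algebra_1) \<Rightarrow> 'x itself \<Rightarrow> bool" where
  "cond_i \<phi> \<psi> _ \<longleftrightarrow>
     (\<forall>(M :: ('b, 'c, 'x) bimod) (\<delta> :: 'a \<Rightarrow> 'x).
        unital_banach_bimodule M \<longrightarrow> bounded_linear_into M \<delta> \<longrightarrow>
        jordan_derivation M \<phi> \<psi> \<delta> \<longrightarrow> derivation M \<phi> \<psi> \<delta>)"

definition cond_ii ::
    "('a::complex_banach_algebra_1 \<Rightarrow> 'b::complex_banach_algebra_1) \<Rightarrow>
     ('a \<Rightarrow> 'c::complex_banach_algebra_1) \<Rightarrow> bool" where
  "cond_ii \<phi> \<psi> \<longleftrightarrow>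
     (\<forall>V :: 'a \<Rightarrow> 'c \<Rightarrow> 'b \<Rightarrow> complex.
        bounded_trilinear_form V \<longrightarrow>
        (\<forall>a b c. V (a * a) c b = V a (\<psi> a * c) b + V a c (b * \<phi> a)) \<longrightarrow>
        (\<forall>a d b c. V (a * d) c b = V a (\<psi> d * c) b + V d c (b * \<phi> a)))"

end

theory Submission
  imports Defs
begin


locale cbs =
  fixes M :: "('b, 'c, 'x) bimod"
  assumes cbs: "complex_banach_space M"
begin

abbreviation "X \<equiv> bm_carrier M"
abbreviation "z0 \<equiv> bm_zero M"
abbreviation "ad \<equiv> bm_add M"
abbreviation "sm \<equiv> bm_smul M"
abbreviation "nm \<equiv> bm_norm M"
abbreviation "neg x \<equiv> sm (-1) x"
abbreviation "smr r x \<equiv> sm (complex_of_real r) x"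

lemma z0X: "z0 \<in> X"
  using cbs unfolding complex_banach_space_def Let_def by (elim conjE) metis

lemma adX: "x \<in> X \<Longrightarrow> y \<in> X \<Longrightarrow> ad x y \<in> X"
  using cbs unfolding complex_banach_space_def Let_def by (elim conjE) metis

lemma smX: "x \<in> X \<Longrightarrow> sm z x \<in> X"
  using cbs unfolding complex_banach_space_def Let_def by (elim conjE) metis

lemma assoc: "x \<in> X \<Longrightarrow> y \<in> X \<Longrightarrow> v \<in> X \<Longrightarrow> ad (ad x y) v = ad x (ad y v)"
  using cbs unfolding complex_banach_space_def Let_def by (elim conjE) metis

lemma comm: "x \<in> X \<Longrightarrow> y \<in> X \<Longrightarrow> ad x y = ad y x"
  using cbs unfolding complex_banach_space_def Let_def by (elim conjE) metis

lemma zl: "x \<in> X \<Longrightarrow> ad z0 x = x"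
  using cbs unfolding complex_banach_space_def Let_def by (elim conjE) metis

lemma inv: "x \<in> X \<Longrightarrow> \<exists>y\<in>X. ad x y = z0"
  using cbs unfolding complex_banach_space_def Let_def by (elim conjE) metis

lemma smadd: "x \<in> X \<Longrightarrow> y \<in> X \<Longrightarrow> sm z (ad x y) = ad (sm z x) (sm z y)"
  using cbs unfolding complex_banach_space_def Let_def by (elim conjE) metis

lemma addsm: "x \<in> X \<Longrightarrow> sm (z + w) x = ad (sm z x) (sm w x)"
  using cbs unfolding complex_banach_space_def Let_def by (elim conjE) metis

lemma smsm: "x \<in> X \<Longrightarrow> sm z (sm w x) = sm (z * w) x"
  using cbs unfolding complex_banach_space_def Let_def by (elim conjE) metis

lemma sm1: "x \<in> X \<Longrightarrow> sm 1 x = x"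
  using cbs unfolding complex_banach_space_def Let_def by (elim conjE) metis

lemma nm0: "x \<in> X \<Longrightarrow> nm x = 0 \<longleftrightarrow> x = z0"
  using cbs unfolding complex_banach_space_def Let_def by (elim conjE) metis

lemma tri: "x \<in> X \<Longrightarrow> y \<in> X \<Longrightarrow> nm (ad x y) \<le> nm x + nm y"
  using cbs unfolding complex_banach_space_def Let_def by (elim conjE) metis

lemma nmsm: "x \<in> X \<Longrightarrow> nm (sm z x) = cmod z * nm x"
  using cbs unfolding complex_banach_space_def Let_def by (elim conjE) metis

lemma zr: "x \<in> X \<Longrightarrow> ad x z0 = x"
  using comm zl z0X by metis

lemma sm0: assumes x: "x \<in> X" shows "sm 0 x = z0"
proof -
  define u where "u = sm 0 x"
  have uX: "u \<in> X" using smX x u_def by blast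
  have uu: "u = ad u u" using addsm[OF x, of 0 0] u_def by simp
  obtain y where y: "y \<in> X" "ad u y = z0" using inv uX by blast
  have "z0 = ad (ad u u) y" using uu y by simp
  also have "\<dots> = ad u z0" using assoc uX y by simp
  also have "\<dots> = u" using zr uX by simp
  finally show ?thesis using u_def by simp
qed

lemma negr: "x \<in> X \<Longrightarrow> ad x (neg x) = z0"
  using addsm[of x 1 "-1"] sm1 sm0 by simp

lemma negl: "x \<in> X \<Longrightarrow> ad (neg x) x = z0"
  using negr comm smX by metis

lemma smz0: "sm z z0 = z0"
  using smsm[OF z0X, of z 0] sm0[OF z0X] by simp

lemma nm_nonneg: assumes "x \<in> X" shows "nm x \<ge> 0"
proof -
  have "0 = nm (ad x (neg x))" using negr nm0 z0X assms by simp
  also have "\<dots> \<le> nm x + nm (neg x)" using tri assms smX by blast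
  also have "\<dots> = 2 * nm x" using nmsm assms by simp
  finally show ?thesis by simp
qed

lemma cancel1: "x \<in> X \<Longrightarrow> u \<in> X \<Longrightarrow> ad (ad x u) (neg x) = u"
  by (metis assoc comm negr smX zr)

lemma neg_ad: "x \<in> X \<Longrightarrow> y \<in> X \<Longrightarrow> neg (ad x y) = ad (neg x) (neg y)"
  using smadd by blast

lemma negneg: "x \<in> X \<Longrightarrow> neg (neg x) = x"
  using smsm sm1 by simp


lemma ac4: "a \<in> X \<Longrightarrow> b \<in> X \<Longrightarrow> c \<in> X \<Longrightarrow> d \<in> X \<Longrightarrow>
   ad (ad a b) (ad c d) = ad (ad a c) (ad b d)"
  by (metis adX assoc comm)

lemma smrX: "x \<in> X \<Longrightarrow> smr r x \<in> X" using smX by blast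
lemma negX: "x \<in> X \<Longrightarrow> neg x \<in> X" using smX by blast

lemma smr0: "x \<in> X \<Longrightarrow> smr 0 x = z0" using sm0 by simp

lemma smr_add: "x \<in> X \<Longrightarrow> smr (s + t) x = ad (smr s x) (smr t x)"
  using addsm[of x "complex_of_real s" "complex_of_real t"] by simp

lemma smr_smr: "x \<in> X \<Longrightarrow> smr s (smr t x) = smr (s * t) x"
  using smsm[of x "complex_of_real s" "complex_of_real t"] by simp

definition sublin :: "('x \<Rightarrow> real) \<Rightarrow> bool" where
  "sublin q \<longleftrightarrow> (\<forall>x\<in>X. \<forall>y\<in>X. q (ad x y) \<le> q x + q y) \<and>
     (\<forall>r>0. \<forall>x\<in>X. q (smr r x) \<le> r * q x) \<and> q z0 = 0"

lemma sublin_cong: "(\<And>x. x \<in> X \<Longrightarrow> q x = q' x) \<Longrightarrow> sublin q = sublin q'"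
  unfolding sublin_def using adX smrX z0X by simp

lemma sublin_add: "sublin q \<Longrightarrow> x \<in> X \<Longrightarrow> y \<in> X \<Longrightarrow> q (ad x y) \<le> q x + q y"
  unfolding sublin_def by blast

lemma sublin_z0: "sublin q \<Longrightarrow> q z0 = 0"
  unfolding sublin_def by blast

lemma sublin_hom: assumes q: "sublin q" and r: "r > 0" and x: "x \<in> X"
  shows "q (smr r x) = r * q x"
proof -
  have le: "q (smr r x) \<le> r * q x" using q r x unfolding sublin_def by blast
  have e1: "smr (1/r) (smr r x) = smr ((1/r)*r) x" by (rule smr_smr[OF x])
  have "(1/r)*r = 1" using r by simp
  hence "smr (1/r) (smr r x) = x" using sm1[OF x] e1 by simp
  hence "q x \<le> (1/r) * q (smr r x)" using q r smrX[OF x, of r] unfolding sublin_def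
    by (metis divide_pos_pos zero_less_one)
  hence "r * q x \<le> q (smr r x)" using r by (simp add: field_simps)
  thus ?thesis using le by simp
qed

lemma sublin_hom0: assumes q: "sublin q" and r: "r \<ge> 0" and x: "x \<in> X"
  shows "q (smr r x) = r * q x"
proof (cases "r = 0")
  case True thus ?thesis using smr0[OF x] sublin_z0[OF q] by simp
next
  case False thus ?thesis using sublin_hom[OF q _ x] r by simp
qed

lemma sublin_lower: assumes q: "sublin q" and x: "x \<in> X" shows "- q (neg x) \<le> q x"
proof -
  have "0 = q (ad x (neg x))" using negr[OF x] sublin_z0[OF q] by simp
  also have "\<dots> \<le> q x + q (neg x)" using sublin_add[OF q x negX[OF x]] .
  finally show ?thesis by simp
qed

definition qs :: "('x \<Rightarrow> real) \<Rightarrow> 'x \<Rightarrow> 'x \<Rightarrow> real" where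
  "qs q y x = Inf ((\<lambda>t. q (ad x (smr t y)) - t * q y) ` {0..})"

lemma qs_bound: assumes q: "sublin q" and x: "x \<in> X" and y: "y \<in> X" and t: "t \<ge> 0"
  shows "- q (neg x) \<le> q (ad x (smr t y)) - t * q y"
proof -
  have u: "ad x (smr t y) \<in> X" using adX x smrX y by blast
  have "smr t y = ad (ad x (smr t y)) (neg x)" using cancel1[OF x smrX[OF y]] by simp
  hence "q (smr t y) \<le> q (ad x (smr t y)) + q (neg x)" using sublin_add[OF q u negX[OF x]] by simp
  thus ?thesis using sublin_hom0[OF q t y] by simp
qed

lemma qs_bdd: assumes q: "sublin q" and x: "x \<in> X" and y: "y \<in> X"
  shows "bdd_below ((\<lambda>t. q (ad x (smr t y)) - t * q y) ` {0..})"
  using qs_bound[OF q x y] unfolding bdd_below_def by blast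

lemma qs_le: assumes q: "sublin q" and x: "x \<in> X" and y: "y \<in> X" and t: "t \<ge> 0"
  shows "qs q y x \<le> q (ad x (smr t y)) - t * q y"
  unfolding qs_def by (rule cInf_lower[OF _ qs_bdd[OF q x y]]) (use t in auto)

lemma qs_ge: assumes "\<And>t. t \<ge> 0 \<Longrightarrow> c \<le> q (ad x (smr t y)) - t * q y"
  shows "c \<le> qs q y x"
  unfolding qs_def by (rule cInf_greatest) (use assms in auto)

lemma qs_le_q: assumes q: "sublin q" and x: "x \<in> X" and y: "y \<in> X"
  shows "qs q y x \<le> q x"
  using qs_le[OF q x y, of 0] smr0[OF y] zr[OF x] by simp

lemma qs_neg: assumes q: "sublin q" and y: "y \<in> X"
  shows "qs q y (neg y) \<le> - q y"
  using qs_le[OF q negX[OF y] y, of 1] sm1[OF y] negl[OF y] sublin_z0[OF q] by simp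

lemma qs_sublin: assumes q: "sublin q" and y: "y \<in> X" shows "sublin (qs q y)"
  unfolding sublin_def
proof (intro conjI ballI allI impI)
  fix x1 x2 assume x1: "x1 \<in> X" and x2: "x2 \<in> X"
  have x12: "ad x1 x2 \<in> X" using adX x1 x2 by blast
  have key: "qs q y (ad x1 x2) \<le> (q (ad x1 (smr t1 y)) - t1 * q y) + (q (ad x2 (smr t2 y)) - t2 * q y)"
    if t1: "t1 \<ge> 0" and t2: "t2 \<ge> 0" for t1 t2
  proof -
    have "ad (ad x1 x2) (smr (t1 + t2) y) = ad (ad x1 (smr t1 y)) (ad x2 (smr t2 y))"
      using smr_add[OF y] ac4 x1 x2 smrX[OF y] by simp
    hence "q (ad (ad x1 x2) (smr (t1 + t2) y)) \<le> q (ad x1 (smr t1 y)) + q (ad x2 (smr t2 y))"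
      using sublin_add[OF q] adX x1 x2 smrX[OF y] by simp
    moreover have "qs q y (ad x1 x2) \<le> q (ad (ad x1 x2) (smr (t1 + t2) y)) - (t1 + t2) * q y"
      using qs_le[OF q x12 y, of "t1 + t2"] t1 t2 by simp
    ultimately show ?thesis by (simp add: algebra_simps)
  qed
  have "qs q y (ad x1 x2) - (q (ad x2 (smr t2 y)) - t2 * q y) \<le> qs q y x1" if t2: "t2 \<ge> 0" for t2
    by (rule qs_ge) (use key t2 in force)
  hence "qs q y (ad x1 x2) - qs q y x1 \<le> qs q y x2"
    by (intro qs_ge) (simp add: algebra_simps)
  thus "qs q y (ad x1 x2) \<le> qs q y x1 + qs q y x2" by simp
next
  fix r :: real and x assume r: "r > 0" and x: "x \<in> X"
  have "qs q y (smr r x) / r \<le> q (ad x (smr s y)) - s * q y" if s: "s \<ge> 0" for s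
  proof -
    have "smr r (ad x (smr s y)) = ad (smr r x) (smr (r * s) y)"
      using smadd[OF x smrX[OF y]] smr_smr[OF y] by simp
    hence "q (ad (smr r x) (smr (r * s) y)) = r * q (ad x (smr s y))"
      using sublin_hom[OF q r] adX[OF x smrX[OF y]] by metis
    moreover have "qs q y (smr r x) \<le> q (ad (smr r x) (smr (r * s) y)) - (r * s) * q y"
      using qs_le[OF q smrX[OF x] y, of "r * s"] r s by simp
    ultimately have "qs q y (smr r x) \<le> r * (q (ad x (smr s y)) - s * q y)"
      by (simp add: algebra_simps)
    thus ?thesis using r by (simp add: field_simps)
  qed
  hence "qs q y (smr r x) / r \<le> qs q y x" by (intro qs_ge)
  thus "qs q y (smr r x) \<le> r * qs q y x" using r by (simp add: field_simps)
next
  have "qs q y z0 \<le> 0" using qs_le_q[OF q z0X y] sublin_z0[OF q] by simp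
  moreover have "0 \<le> qs q y z0"
    by (rule qs_ge) (simp add: zl smrX[OF y] sublin_hom0[OF q _ y])
  ultimately show "qs q y z0 = 0" by simp
qed


end


context cbs
begin
definition belowA :: "('x \<Rightarrow> real) \<Rightarrow> ('x \<Rightarrow> real) set" where
  "belowA p = {q. sublin q \<and> (\<forall>x\<in>X. q x \<le> p x) \<and> (\<forall>x. x \<notin> X \<longrightarrow> q x = 0)}"

definition Rel :: "('x \<Rightarrow> real) \<Rightarrow> ('x \<Rightarrow> real) \<Rightarrow> bool" where
  "Rel a b \<longleftrightarrow> (\<forall>x\<in>X. b x \<le> a x)"

lemma po: "partial_order_on (belowA p) (relation_of Rel (belowA p))"
  unfolding partial_order_on_def preorder_on_def
proof (intro conjI)
  show "relation_of Rel (belowA p) \<subseteq> belowA p \<times> belowA p" unfolding relation_of_def by auto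
  show "refl_on (belowA p) (relation_of Rel (belowA p))"
    unfolding refl_on_def relation_of_def Rel_def by auto
  show "trans (relation_of Rel (belowA p))"
  proof (rule transI)
    fix a b c assume "(a, b) \<in> relation_of Rel (belowA p)" "(b, c) \<in> relation_of Rel (belowA p)"
    thus "(a, c) \<in> relation_of Rel (belowA p)" unfolding relation_of_def Rel_def
      by (auto intro: order_trans)
  qed
  show "antisym (relation_of Rel (belowA p))"
  proof (rule antisymI)
    fix a b assume ab: "(a, b) \<in> relation_of Rel (belowA p)" "(b, a) \<in> relation_of Rel (belowA p)"
    show "a = b"
    proof
      fix x show "a x = b x"
      proof (cases "x \<in> X")
        case True thus ?thesis using ab unfolding relation_of_def Rel_def
          by (auto intro: order.antisym)
      next
        case False thus ?thesis using ab unfolding relation_of_def belowA_def by auto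
      qed
    qed
  qed
qed

lemma chain_bound:
  assumes p: "sublin p" and C: "C \<in> Chains (relation_of Rel (belowA p))"
  shows "\<exists>u\<in>belowA p. \<forall>a\<in>C. Rel a u"
proof (cases "C = {}")
  case True
  let ?u = "\<lambda>x. if x \<in> X then p x else 0"
  have "sublin ?u" using sublin_cong[of ?u p] p by simp
  hence "?u \<in> belowA p" unfolding belowA_def by auto
  thus ?thesis using True by blast
next
  case False
  hence Cne: "C \<noteq> {}" .
  have CA: "C \<subseteq> belowA p" using Chains_relation_of[OF C] .
  have cmp: "Rel a b \<or> Rel b a" if "a \<in> C" "b \<in> C" for a b
    using C that unfolding Chains_def relation_of_def by blast
  have sl: "sublin a" and lep: "\<And>x. x \<in> X \<Longrightarrow> a x \<le> p x" if "a \<in> C" for a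
    using CA that unfolding belowA_def by auto
  define u where "u = (\<lambda>x. if x \<in> X then Inf ((\<lambda>q. q x) ` C) else 0)"
  have bdd: "bdd_below ((\<lambda>q. q x) ` C)" if x: "x \<in> X" for x
  proof -
    have "- p (neg x) \<le> q x" if q: "q \<in> C" for q
      using sublin_lower[OF sl[OF q] x] lep[OF q negX[OF x]] by linarith
    thus ?thesis unfolding bdd_below_def by blast
  qed
  have ule: "u x \<le> q x" if "x \<in> X" "q \<in> C" for x q
    using that bdd unfolding u_def by (auto intro: cInf_lower)
  have uge: "c \<le> u x" if "x \<in> X" "\<And>q. q \<in> C \<Longrightarrow> c \<le> q x" for x c
    using that Cne unfolding u_def by (auto intro: cInf_greatest)
  have "sublin u" unfolding sublin_def
  proof (intro conjI ballI allI impI)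
    fix x y assume x: "x \<in> X" and y: "y \<in> X"
    have xy: "ad x y \<in> X" using adX x y by blast
    have k: "u (ad x y) \<le> q1 x + q2 y" if q1: "q1 \<in> C" and q2: "q2 \<in> C" for q1 q2
    proof (cases "Rel q1 q2")
      case True
      have "u (ad x y) \<le> q2 (ad x y)" using ule xy q2 by blast
      also have "\<dots> \<le> q2 x + q2 y" using sublin_add[OF sl[OF q2] x y] .
      also have "\<dots> \<le> q1 x + q2 y" using True x unfolding Rel_def by auto
      finally show ?thesis .
    next
      case False
      hence R: "Rel q2 q1" using cmp q1 q2 by blast
      have "u (ad x y) \<le> q1 (ad x y)" using ule xy q1 by blast
      also have "\<dots> \<le> q1 x + q1 y" using sublin_add[OF sl[OF q1] x y] .
      also have "\<dots> \<le> q1 x + q2 y" using R y unfolding Rel_def by auto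
      finally show ?thesis .
    qed
    have "u (ad x y) - q2 y \<le> u x" if q2: "q2 \<in> C" for q2
      using uge[OF x] k q2 by (metis diff_le_eq)
    hence "u (ad x y) - u x \<le> u y" using uge[OF y] by (metis diff_le_eq add.commute)
    thus "u (ad x y) \<le> u x + u y" by simp
  next
    fix r :: real and x assume r: "r > 0" and x: "x \<in> X"
    have "u (smr r x) / r \<le> q x" if q: "q \<in> C" for q
    proof -
      have "u (smr r x) \<le> q (smr r x)" using ule smrX[OF x] q by blast
      also have "\<dots> = r * q x" using sublin_hom[OF sl[OF q] r x] .
      finally show ?thesis using r by (simp add: field_simps)
    qed
    hence "u (smr r x) / r \<le> u x" using uge[OF x] by blast
    thus "u (smr r x) \<le> r * u x" using r by (simp add: field_simps)
  next
    obtain q where q: "q \<in> C" using Cne by auto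
    have "u z0 \<le> 0" using ule[OF z0X q] sublin_z0[OF sl[OF q]] by linarith
    moreover have "0 \<le> u z0" by (rule uge[OF z0X]) (simp add: sublin_z0[OF sl])
    ultimately show "u z0 = 0" by simp
  qed
  moreover have "\<forall>x\<in>X. u x \<le> p x"
  proof
    fix x assume x: "x \<in> X"
    obtain q where q: "q \<in> C" using Cne by auto
    show "u x \<le> p x" using ule[OF x q] lep[OF q x] by simp
  qed
  moreover have "\<forall>x. x \<notin> X \<longrightarrow> u x = 0" unfolding u_def by simp
  ultimately have "u \<in> belowA p" unfolding belowA_def by blast
  moreover have "\<forall>a\<in>C. Rel a u" unfolding Rel_def using ule by blast
  ultimately show ?thesis by blast
qed

lemma linear_below:
  assumes p: "sublin p"
  shows "\<exists>g. (\<forall>x\<in>X. g x \<le> p x) \<and> (\<forall>x\<in>X. \<forall>y\<in>X. g (ad x y) = g x + g y) \<and>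
             (\<forall>r. \<forall>x\<in>X. g (smr r x) = r * g x)"
proof -
  obtain m where mA: "m \<in> belowA p" and mmax: "\<forall>a\<in>belowA p. Rel m a \<longrightarrow> a = m"
    using predicate_Zorn[OF po chain_bound[OF p]] by blast
  have ms: "sublin m" and mp: "\<forall>x\<in>X. m x \<le> p x" using mA unfolding belowA_def by auto
  have mneg: "m (neg y) = - m y" if y: "y \<in> X" for y
  proof -
    define q' where "q' = (\<lambda>x. if x \<in> X then qs m y x else 0)"
    have s1: "sublin q'"
      using sublin_cong[of q' "qs m y"] qs_sublin[OF ms y] unfolding q'_def by simp
    have s2: "q' x \<le> m x" if x: "x \<in> X" for x
      unfolding q'_def using qs_le_q[OF ms x y] x by simp
    have s3: "\<forall>x\<in>X. q' x \<le> p x" using s2 mp by (meson order_trans)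
    have s4: "\<forall>x. x \<notin> X \<longrightarrow> q' x = 0" unfolding q'_def by simp
    have "q' \<in> belowA p" unfolding belowA_def using s1 s3 s4 by blast
    moreover have "Rel m q'" unfolding Rel_def using s2 by blast
    ultimately have "q' = m" using mmax by blast
    moreover have "q' (neg y) = qs m y (neg y)" unfolding q'_def using negX[OF y] by simp
    ultimately have "m (neg y) = qs m y (neg y)" by simp
    hence "m (neg y) \<le> - m y" using qs_neg[OF ms y] by linarith
    thus ?thesis using sublin_lower[OF ms y] by linarith
  qed
  have madd: "m (ad x y) = m x + m y" if x: "x \<in> X" and y: "y \<in> X" for x y
  proof -
    have xy: "ad x y \<in> X" using adX x y by blast
    have e: "ad (ad x y) (neg y) = x" using assoc[OF x y negX[OF y]] negr[OF y] zr[OF x] by simp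
    have "m (ad (ad x y) (neg y)) \<le> m (ad x y) + m (neg y)" using sublin_add[OF ms xy negX[OF y]] .
    hence "m x \<le> m (ad x y) + m (neg y)" unfolding e .
    thus ?thesis using mneg[OF y] sublin_add[OF ms x y] by simp
  qed
  have mhom: "m (smr r x) = r * m x" if x: "x \<in> X" for r x
  proof (cases "r \<ge> 0")
    case True thus ?thesis using sublin_hom0[OF ms True x] by simp
  next
    case False
    have "smr r x = neg (smr (-r) x)" using smsm[OF x, of "-1" "complex_of_real (-r)"] by simp
    hence "m (smr r x) = - m (smr (-r) x)" using mneg[OF smrX[OF x, of "-r"]] by simp
    also have "\<dots> = r * m x" using sublin_hom0[OF ms _ x, of "-r"] False by simp
    finally show ?thesis .
  qed
  show ?thesis using mp madd mhom by blast
qed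

end


context cbs
begin

lemma nm_sublin: "sublin nm"
  unfolding sublin_def using tri nmsm nm0 z0X by simp

lemma negsmr: "smr (-1) x = neg x" by simp

lemma real_HB: assumes w: "w \<in> X" and wz: "w \<noteq> z0"
  shows "\<exists>g. (\<forall>x\<in>X. \<forall>y\<in>X. g (ad x y) = g x + g y) \<and> (\<forall>r. \<forall>x\<in>X. g (smr r x) = r * g x)
     \<and> (\<forall>x\<in>X. \<bar>g x\<bar> \<le> nm x) \<and> g w > 0"
proof -
  have ps: "sublin (qs nm w)" using qs_sublin[OF nm_sublin w] .
  obtain g where gp: "\<forall>x\<in>X. g x \<le> qs nm w x" and gadd: "\<forall>x\<in>X. \<forall>y\<in>X. g (ad x y) = g x + g y"
    and ghom: "\<forall>r. \<forall>x\<in>X. g (smr r x) = r * g x"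
    using linear_below[OF ps] by blast
  have gneg: "g (neg x) = - g x" if "x \<in> X" for x
    using ghom that negsmr by (metis mult_minus1)
  have gle: "g x \<le> nm x" if x: "x \<in> X" for x
    using gp qs_le_q[OF nm_sublin x w] x by (meson order_trans)
  have gabs: "\<bar>g x\<bar> \<le> nm x" if x: "x \<in> X" for x
  proof -
    have "- g x \<le> nm x" using gle[OF negX[OF x]] gneg[OF x] nmsm[OF x, of "-1"] by simp
    thus ?thesis using gle[OF x] by simp
  qed
  have "g (neg w) \<le> - nm w" using gp negX[OF w] qs_neg[OF nm_sublin w] by (meson order_trans)
  hence "nm w \<le> g w" using gneg[OF w] by simp
  moreover have "nm w > 0" using nm_nonneg[OF w] nm0[OF w] wz by simp
  ultimately have "g w > 0" by simp
  thus ?thesis using gadd ghom gabs by blast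
qed

lemma complex_HB: assumes w: "w \<in> X" and wz: "w \<noteq> z0"
  shows "\<exists>f. (\<forall>x\<in>X. \<forall>y\<in>X. f (ad x y) = f x + f y) \<and> (\<forall>z. \<forall>x\<in>X. f (sm z x) = z * f x)
     \<and> (\<forall>x\<in>X. cmod (f x) \<le> 2 * nm x) \<and> f w \<noteq> 0"
proof -
  obtain g where gadd: "\<forall>x\<in>X. \<forall>y\<in>X. g (ad x y) = g x + g y"
    and ghom: "\<forall>r. \<forall>x\<in>X. g (smr r x) = r * g x" and gabs: "\<forall>x\<in>X. \<bar>g x\<bar> \<le> nm x"
    and gw: "g w > 0"
    using real_HB[OF w wz] by blast
  define f where "f x = complex_of_real (g x) - \<i> * complex_of_real (g (sm \<i> x))" for x
  have gsm: "g (sm z x) = Re z * g x + Im z * g (sm \<i> x)" if x: "x \<in> X" for z x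
  proof -
    have "ad (smr (Re z) x) (smr (Im z) (sm \<i> x)) = ad (smr (Re z) x) (sm (complex_of_real (Im z) * \<i>) x)"
      using smsm[OF x] by simp
    also have "\<dots> = sm (complex_of_real (Re z) + complex_of_real (Im z) * \<i>) x"
      using addsm[OF x] by simp
    also have "complex_of_real (Re z) + complex_of_real (Im z) * \<i> = z"
      by (simp add: complex_eq_iff)
    finally have e: "sm z x = ad (smr (Re z) x) (smr (Im z) (sm \<i> x))" by simp
    show ?thesis unfolding e using gadd ghom smrX smX x by simp
  qed
  have fadd: "\<forall>x\<in>X. \<forall>y\<in>X. f (ad x y) = f x + f y"
    unfolding f_def using gadd smadd smX by (simp add: algebra_simps)
  have fhom: "f (sm z x) = z * f x" if x: "x \<in> X" for z x
  proof -
    have a: "g (sm z x) = Re z * g x + Im z * g (sm \<i> x)" using gsm[OF x] .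
    have b: "g (sm \<i> (sm z x)) = - Im z * g x + Re z * g (sm \<i> x)"
      using gsm[OF x, of "\<i> * z"] smsm[OF x, of \<i> z] by simp
    show ?thesis unfolding f_def a b by (simp add: complex_eq_iff algebra_simps)
  qed
  have fb: "cmod (f x) \<le> 2 * nm x" if x: "x \<in> X" for x
  proof -
    have "cmod (f x) \<le> cmod (complex_of_real (g x)) + cmod (\<i> * complex_of_real (g (sm \<i> x)))"
      unfolding f_def by (rule norm_triangle_ineq4)
    also have "\<dots> = \<bar>g x\<bar> + \<bar>g (sm \<i> x)\<bar>" by (simp add: norm_mult)
    also have "\<dots> \<le> nm x + nm (sm \<i> x)" using gabs x smX by (meson add_mono)
    also have "\<dots> = 2 * nm x" using nmsm[OF x] by simp
    finally show ?thesis .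
  qed
  have "Re (f w) = g w" unfolding f_def by simp
  hence "f w \<noteq> 0" using gw by auto
  thus ?thesis using fadd fhom fb by blast
qed

lemma separate:
  assumes u: "u \<in> X" and v: "v \<in> X"
    and H: "\<And>f. (\<forall>x\<in>X. \<forall>y\<in>X. f (ad x y) = f x + f y) \<Longrightarrow> (\<forall>z. \<forall>x\<in>X. f (sm z x) = z * f x)
      \<Longrightarrow> (\<forall>x\<in>X. cmod (f x) \<le> 2 * nm x) \<Longrightarrow> f u = f v"
  shows "u = v"
proof (rule ccontr)
  assume uv: "u \<noteq> v"
  define w where "w = ad u (neg v)"
  have wX: "w \<in> X" unfolding w_def using adX u negX v by blast
  have e: "ad w v = u" unfolding w_def using assoc[OF u negX[OF v] v] negl[OF v] zr[OF u] by simp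
  have wz: "w \<noteq> z0" using e uv zl[OF v] by auto
  obtain f where fa: "\<forall>x\<in>X. \<forall>y\<in>X. f (ad x y) = f x + f y" and fh: "\<forall>z. \<forall>x\<in>X. f (sm z x) = z * f x"
    and fb: "\<forall>x\<in>X. cmod (f x) \<le> 2 * nm x" and fw: "f w \<noteq> 0"
    using complex_HB[OF wX wz] by blast
  have "f u = f v" using H fa fh fb by blast
  moreover have "f w = f u - f v" unfolding w_def using fa fh u v negX by simp
  ultimately show False using fw by simp
qed

end


definition bil :: "('c::complex_normed_vector \<Rightarrow> 'b::complex_normed_vector \<Rightarrow> complex) \<Rightarrow> bool" where
  "bil F \<longleftrightarrow> (\<forall>c c' b. F (c + c') b = F c b + F c' b) \<and> (\<forall>z c b. F (scaleC z c) b = z * F c b) \<and>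
     (\<forall>c b b'. F c (b + b') = F c b + F c b') \<and> (\<forall>z c b. F c (scaleC z b) = z * F c b) \<and>
     (\<exists>K. \<forall>c b. cmod (F c b) \<le> K * norm c * norm b)"

definition onrm :: "('c::complex_normed_vector \<Rightarrow> 'b::complex_normed_vector \<Rightarrow> complex) \<Rightarrow> real" where
  "onrm F = Sup (range (\<lambda>p. cmod (F (fst p) (snd p)) / (norm (fst p) * norm (snd p))))"

lemma bil_addL: "bil F \<Longrightarrow> F (c + c') b = F c b + F c' b" unfolding bil_def by blast
lemma bil_addR: "bil F \<Longrightarrow> F c (b + b') = F c b + F c b'" unfolding bil_def by blast
lemma bil_scL: "bil F \<Longrightarrow> F (scaleC z c) b = z * F c b" unfolding bil_def by blast
lemma bil_scR: "bil F \<Longrightarrow> F c (scaleC z b) = z * F c b" unfolding bil_def by blast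

lemma bil_0L: "bil F \<Longrightarrow> F 0 b = 0"
  using bil_addL[of F 0 0 b] by simp
lemma bil_0R: "bil F \<Longrightarrow> F c 0 = 0"
  using bil_addR[of F c 0 0] by simp

lemma ratio_le:
  assumes "\<And>c b. cmod (F c b) \<le> K * norm c * norm b" and "K \<ge> 0"
  shows "cmod (F c b) / (norm c * norm b) \<le> K"
proof (cases "norm c * norm b = 0")
  case True thus ?thesis by (simp only: True) (simp add: assms(2))
next
  case False
  hence "norm c * norm b > 0" by (simp add: zero_less_mult_iff)
  thus ?thesis using assms(1)[of c b] by (simp add: pos_divide_le_eq mult.assoc)
qed

lemma onrm_le:
  assumes "\<And>c b. cmod (F c b) \<le> K * norm c * norm b" and "K \<ge> 0"
  shows "onrm F \<le> K"
  unfolding onrm_def by (rule cSup_least) (use ratio_le[OF assms] in auto)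

lemma bil_bdd: assumes "bil F"
  shows "bdd_above (range (\<lambda>p. cmod (F (fst p) (snd p)) / (norm (fst p) * norm (snd p))))"
proof -
  obtain K where K: "\<And>c b. cmod (F c b) \<le> K * norm c * norm b" using assms unfolding bil_def by blast
  have "cmod (F c b) \<le> max K 0 * norm c * norm b" for c b
  proof -
    have "K * norm c * norm b \<le> max K 0 * norm c * norm b"
      by (intro mult_right_mono) auto
    thus ?thesis using K[of c b] by linarith
  qed
  hence "\<And>c b. cmod (F c b) / (norm c * norm b) \<le> max K 0" by (intro ratio_le) auto
  thus ?thesis unfolding bdd_above_def by auto
qed

lemma onrm_nonneg: assumes "bil F" shows "onrm F \<ge> 0"
proof -
  have "cmod (F (fst (0,0)) (snd (0,0))) / (norm (fst (0::'a,0::'b)) * norm (snd (0::'a,0::'b))) \<le> onrm F"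
    unfolding onrm_def by (rule cSup_upper[OF _ bil_bdd[OF assms]]) (rule image_eqI[where x="(0,0)"], auto)
  thus ?thesis by simp
qed

lemma onrm_bound: assumes F: "bil F" shows "cmod (F c b) \<le> onrm F * norm c * norm b"
proof (cases "c = 0 \<or> b = 0")
  case True thus ?thesis using bil_0L[OF F] bil_0R[OF F] by auto
next
  case False
  hence pos: "norm c * norm b > 0" by simp
  have "cmod (F (fst (c,b)) (snd (c,b))) / (norm (fst (c,b)) * norm (snd (c,b))) \<le> onrm F"
    unfolding onrm_def by (rule cSup_upper[OF _ bil_bdd[OF F]]) (rule image_eqI[where x="(c,b)"], auto)
  thus ?thesis using pos by (simp add: pos_divide_le_eq mult.assoc)
qed



lemma bilI:
  assumes "\<And>c c' b. F (c + c') b = F c b + F c' b" "\<And>z c b. F (scaleC z c) b = z * F c b"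
    "\<And>c b b'. F c (b + b') = F c b + F c b'" "\<And>z c b. F c (scaleC z b) = z * F c b"
    "\<And>c b. cmod (F c b) \<le> K * norm c * norm b"
  shows "bil F"
  unfolding bil_def using assms by blast

lemma bil_zero: "bil (\<lambda>c b. 0)" by (rule bilI[where K=0]) auto

lemma bil_add: assumes F: "bil F" and G: "bil G" shows "bil (\<lambda>c b. F c b + G c b)"
proof -
  obtain K1 where K1: "\<And>c b. cmod (F c b) \<le> K1 * norm c * norm b" using F unfolding bil_def by blast
  obtain K2 where K2: "\<And>c b. cmod (G c b) \<le> K2 * norm c * norm b" using G unfolding bil_def by blast
  have "cmod (F c b + G c b) \<le> (K1 + K2) * norm c * norm b" for c b
    using norm_triangle_ineq[of "F c b" "G c b"] K1[of c b] K2[of c b] by (simp add: algebra_simps)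
  thus ?thesis using F G by (intro bilI[where K="K1+K2"]) (auto simp: algebra_simps bil_addL bil_addR bil_scL bil_scR)
qed

lemma bil_sm: assumes F: "bil F" shows "bil (\<lambda>c b. z * F c b)"
proof -
  obtain K where K: "\<And>c b. cmod (F c b) \<le> K * norm c * norm b" using F unfolding bil_def by blast
  have "cmod (z * F c b) \<le> (cmod z * K) * norm c * norm b" for c b
    using mult_left_mono[OF K[of c b], of "cmod z"] by (simp add: norm_mult mult.assoc)
  thus ?thesis using F by (intro bilI[where K="cmod z * K"]) (auto simp: algebra_simps bil_addL bil_addR bil_scL bil_scR)
qed

lemma bil_l: assumes F: "bil (F :: 'c::complex_normed_vector \<Rightarrow> 'b::complex_banach_algebra_1 \<Rightarrow> complex)"
  shows "bil (\<lambda>c b. F c (b * b'))"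
proof -
  have "cmod (F c (b * b')) \<le> (onrm F * norm b') * norm c * norm b" for c b
  proof -
    have "cmod (F c (b * b')) \<le> onrm F * norm c * norm (b * b')" using onrm_bound[OF F] .
    also have "\<dots> \<le> onrm F * norm c * (norm b * norm b')"
      by (intro mult_left_mono norm_mult_ineq) (simp add: onrm_nonneg[OF F])
    finally show ?thesis by (simp add: algebra_simps)
  qed
  thus ?thesis using F by (intro bilI[where K="onrm F * norm b'"]) (auto simp: distrib_right mult_scaleC_left bil_addL bil_addR bil_scL bil_scR)
qed

lemma bil_r: assumes F: "bil (F :: 'c::complex_banach_algebra_1 \<Rightarrow> 'b::complex_normed_vector \<Rightarrow> complex)"
  shows "bil (\<lambda>c b. F (c' * c) b)"
proof -
  have "cmod (F (c' * c) b) \<le> (onrm F * norm c') * norm c * norm b" for c b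
  proof -
    have "cmod (F (c' * c) b) \<le> onrm F * norm (c' * c) * norm b" using onrm_bound[OF F] .
    also have "\<dots> \<le> onrm F * (norm c' * norm c) * norm b"
      by (intro mult_right_mono mult_left_mono norm_mult_ineq) (simp_all add: onrm_nonneg[OF F])
    finally show ?thesis by (simp add: algebra_simps)
  qed
  thus ?thesis using F by (intro bilI[where K="onrm F * norm c'"]) (auto simp: distrib_left mult_scaleC_right bil_addL bil_addR bil_scL bil_scR)
qed

lemma bil_complete:
  fixes s :: "nat \<Rightarrow> 'c::complex_normed_vector \<Rightarrow> 'b::complex_normed_vector \<Rightarrow> complex"
  assumes s: "\<forall>n. bil (s n)"
    and C: "\<forall>e>0. \<exists>N. \<forall>m\<ge>N. \<forall>n\<ge>N. onrm (\<lambda>c b. s m c b + -1 * s n c b) < e"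
  shows "\<exists>l. bil l \<and> (\<forall>e>0. \<exists>N. \<forall>n\<ge>N. onrm (\<lambda>c b. s n c b + -1 * l c b) < e)"
proof -
  have Dbil: "bil (\<lambda>c b. s m c b + -1 * s n c b)" for m n
    using bil_add[OF s[rule_format, of m] bil_sm[OF s[rule_format, of n]]] .
  have pw: "cmod (s m c b - s n c b) \<le> onrm (\<lambda>c b. s m c b + -1 * s n c b) * norm c * norm b" for m n c b
    using onrm_bound[OF Dbil[of m n], of c b] by simp
  have cau: "Cauchy (\<lambda>n. s n c b)" for c b
    unfolding Cauchy_def
  proof (intro allI impI)
    fix e :: real assume e: "e > 0"
    define D where "D = norm c * norm b + 1"
    have D: "D > 0" unfolding D_def by (simp add: add_nonneg_pos)
    obtain N where N: "\<forall>m\<ge>N. \<forall>n\<ge>N. onrm (\<lambda>c b. s m c b + -1 * s n c b) < e / D"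
      using C e D by (meson divide_pos_pos)
    have "dist (s m c b) (s n c b) < e" if "m \<ge> N" "n \<ge> N" for m n
    proof -
      let ?o = "onrm (\<lambda>c b. s m c b + -1 * s n c b)"
      have o0: "?o \<ge> 0" using onrm_nonneg[OF Dbil] .
      have "dist (s m c b) (s n c b) \<le> ?o * (norm c * norm b)" using pw[of m c b n] by (simp add: dist_norm mult.assoc)
      also have "\<dots> \<le> ?o * D" unfolding D_def by (intro mult_left_mono o0) auto
      also have "\<dots> < (e / D) * D" using N that D by (intro mult_strict_right_mono) auto
      also have "\<dots> = e" using D by simp
      finally show ?thesis .
    qed
    thus "\<exists>M. \<forall>m\<ge>M. \<forall>n\<ge>M. dist (s m c b) (s n c b) < e" by blast
  qed
  define l where "l c b = lim (\<lambda>n. s n c b)" for c b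
  have lim: "(\<lambda>n. s n c b) \<longlonglongrightarrow> l c b" for c b
    unfolding l_def using cau[of c b] by (simp add: Cauchy_convergent_iff convergent_LIMSEQ_iff)
  have est: "\<exists>N. \<forall>n\<ge>N. \<forall>c b. cmod (s n c b - l c b) \<le> e * norm c * norm b" if e: "e > 0" for e
  proof -
    obtain N where N: "\<forall>m\<ge>N. \<forall>n\<ge>N. onrm (\<lambda>c b. s m c b + -1 * s n c b) < e" using C e by blast
    have "cmod (s n c b - l c b) \<le> e * norm c * norm b" if n: "n \<ge> N" for n c b
    proof (rule LIMSEQ_le_const2)
      show "(\<lambda>m. cmod (s n c b - s m c b)) \<longlonglongrightarrow> cmod (s n c b - l c b)"
        by (intro tendsto_norm tendsto_diff tendsto_const lim)
      have "cmod (s n c b - s m c b) \<le> e * norm c * norm b" if m: "m \<ge> N" for m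
      proof -
        have "cmod (s n c b - s m c b) \<le> onrm (\<lambda>c b. s n c b + -1 * s m c b) * norm c * norm b"
          using pw .
        also have "\<dots> \<le> e * norm c * norm b"
          using N n m by (intro mult_right_mono) (auto intro: less_imp_le)
        finally show ?thesis .
      qed
      thus "\<exists>N. \<forall>m\<ge>N. cmod (s n c b - s m c b) \<le> e * norm c * norm b" by blast
    qed
    thus ?thesis by blast
  qed
  have lbil: "bil l"
    unfolding bil_def
  proof (intro conjI allI)
    fix c c' b
    have "(\<lambda>n. s n c b + s n c' b) \<longlonglongrightarrow> l c b + l c' b" by (intro tendsto_add lim)
    moreover have "(\<lambda>n. s n c b + s n c' b) = (\<lambda>n. s n (c + c') b)" using s by (simp add: bil_addL)
    ultimately show "l (c + c') b = l c b + l c' b" using lim LIMSEQ_unique by metis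
  next
    fix z c b
    have "(\<lambda>n. z * s n c b) \<longlonglongrightarrow> z * l c b" by (intro tendsto_mult_left lim)
    moreover have "(\<lambda>n. z * s n c b) = (\<lambda>n. s n (scaleC z c) b)" using s by (simp add: bil_scL)
    ultimately show "l (scaleC z c) b = z * l c b" using lim LIMSEQ_unique by metis
  next
    fix c b b'
    have "(\<lambda>n. s n c b + s n c b') \<longlonglongrightarrow> l c b + l c b'" by (intro tendsto_add lim)
    moreover have "(\<lambda>n. s n c b + s n c b') = (\<lambda>n. s n c (b + b'))" using s by (simp add: bil_addR)
    ultimately show "l c (b + b') = l c b + l c b'" using lim LIMSEQ_unique by metis
  next
    fix z c b
    have "(\<lambda>n. z * s n c b) \<longlonglongrightarrow> z * l c b" by (intro tendsto_mult_left lim)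
    moreover have "(\<lambda>n. z * s n c b) = (\<lambda>n. s n c (scaleC z b))" using s by (simp add: bil_scR)
    ultimately show "l c (scaleC z b) = z * l c b" using lim LIMSEQ_unique by metis
  next
    obtain N where N: "\<forall>n\<ge>N. \<forall>c b. cmod (s n c b - l c b) \<le> 1 * norm c * norm b" using est[of 1] by auto
    have "cmod (l c b) \<le> (onrm (s N) + 1) * norm c * norm b" for c b
    proof -
      have "cmod (l c b) = cmod (s N c b - (s N c b - l c b))" by simp
      also have "\<dots> \<le> cmod (s N c b) + cmod (s N c b - l c b)" by (rule norm_triangle_ineq4)
      also have "\<dots> \<le> onrm (s N) * norm c * norm b + 1 * norm c * norm b"
        using onrm_bound[OF s[rule_format, of N]] N by (intro add_mono) auto
      finally show ?thesis by (simp add: algebra_simps)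
    qed
    thus "\<exists>K. \<forall>c b. cmod (l c b) \<le> K * norm c * norm b" by blast
  qed
  have "\<exists>N. \<forall>n\<ge>N. onrm (\<lambda>c b. s n c b + -1 * l c b) < e" if e: "e > 0" for e
  proof -
    obtain N where N: "\<forall>n\<ge>N. \<forall>c b. cmod (s n c b - l c b) \<le> (e/2) * norm c * norm b"
      using est[of "e/2"] e by auto
    have "onrm (\<lambda>c b. s n c b + -1 * l c b) \<le> e/2" if n: "n \<ge> N" for n
      by (rule onrm_le) (use N n e in auto)
    moreover have "e/2 < e" using e by simp
    ultimately show ?thesis by (blast intro: le_less_trans)
  qed
  thus ?thesis using lbil by blast
qed



definition bilM :: "('b::complex_banach_algebra_1, 'c::complex_banach_algebra_1, 'c \<Rightarrow> 'b \<Rightarrow> complex) bimod" where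
  "bilM = \<lparr>bm_carrier = {F. bil F}, bm_zero = (\<lambda>c b. 0), bm_add = (\<lambda>F G c b. F c b + G c b),
     bm_smul = (\<lambda>z F c b. z * F c b), bm_norm = onrm,
     bm_lact = (\<lambda>b' F c b. F c (b * b')), bm_ract = (\<lambda>F c' c b. F (c' * c) b)\<rparr>"

lemma bilM_simps:
  "bm_carrier bilM = {F. bil F}" "bm_zero bilM = (\<lambda>c b. 0)" "bm_add bilM = (\<lambda>F G c b. F c b + G c b)"
  "bm_smul bilM = (\<lambda>z F c b. z * F c b)" "bm_norm bilM = onrm"
  "bm_lact bilM = (\<lambda>b' F c b. F c (b * b'))" "bm_ract bilM = (\<lambda>F c' c b. F (c' * c) b)"
  by (simp_all add: bilM_def)

lemma onrm_zero_iff: assumes F: "bil F" shows "onrm F = 0 \<longleftrightarrow> F = (\<lambda>c b. 0)"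
proof
  assume "onrm F = 0"
  hence "cmod (F c b) \<le> 0" for c b using onrm_bound[OF F, of c b] by simp
  thus "F = (\<lambda>c b. 0)" by (intro ext) simp
next
  assume "F = (\<lambda>c b. 0)"
  hence "onrm F \<le> 0" by (intro onrm_le[where K=0]) auto
  thus "onrm F = 0" using onrm_nonneg[OF F] by simp
qed

lemma onrm_tri: assumes F: "bil F" and G: "bil G" shows "onrm (\<lambda>c b. F c b + G c b) \<le> onrm F + onrm G"
proof (rule onrm_le)
  fix c b
  have "cmod (F c b + G c b) \<le> cmod (F c b) + cmod (G c b)" by (rule norm_triangle_ineq)
  also have "\<dots> \<le> onrm F * norm c * norm b + onrm G * norm c * norm b"
    using onrm_bound[OF F] onrm_bound[OF G] by (rule add_mono)
  finally show "cmod (F c b + G c b) \<le> (onrm F + onrm G) * norm c * norm b" by (simp add: algebra_simps)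
next
  show "0 \<le> onrm F + onrm G" using onrm_nonneg[OF F] onrm_nonneg[OF G] by simp
qed

lemma onrm_sm: assumes F: "bil F" shows "onrm (\<lambda>c b. z * F c b) = cmod z * onrm F"
proof (rule antisym)
  show "onrm (\<lambda>c b. z * F c b) \<le> cmod z * onrm F"
  proof (rule onrm_le)
    fix c b
    show "cmod (z * F c b) \<le> cmod z * onrm F * norm c * norm b"
      using mult_left_mono[OF onrm_bound[OF F, of c b], of "cmod z"] by (simp add: norm_mult mult.assoc)
  qed (simp add: onrm_nonneg[OF F])
next
  show "cmod z * onrm F \<le> onrm (\<lambda>c b. z * F c b)"
  proof (cases "z = 0")
    case True thus ?thesis using onrm_nonneg[OF bil_sm[OF F, of z]] by simp
  next
    case False
    have zF: "bil (\<lambda>c b. z * F c b)" using bil_sm[OF F] .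
    have "onrm F \<le> onrm (\<lambda>c b. z * F c b) / cmod z"
    proof (rule onrm_le)
      fix c b
      have "cmod z * cmod (F c b) \<le> onrm (\<lambda>c b. z * F c b) * norm c * norm b"
        using onrm_bound[OF zF, of c b] by (simp add: norm_mult)
      thus "cmod (F c b) \<le> onrm (\<lambda>c b. z * F c b) / cmod z * norm c * norm b"
        using False by (simp add: field_simps)
    qed (use onrm_nonneg[OF zF] in simp)
    thus ?thesis using False by (simp add: field_simps)
  qed
qed

lemma bilM_cbs: "complex_banach_space (bilM :: ('b::complex_banach_algebra_1, 'c::complex_banach_algebra_1, 'c \<Rightarrow> 'b \<Rightarrow> complex) bimod)"
  unfolding complex_banach_space_def Let_def bilM_simps
proof (intro conjI ballI allI impI)
  show "(\<lambda>c b. 0) \<in> {F :: 'c \<Rightarrow> 'b \<Rightarrow> complex. bil F}" using bil_zero by simp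
next
  fix x y :: "'c \<Rightarrow> 'b \<Rightarrow> complex" assume x: "x \<in> {F. bil F}" and y: "y \<in> {F. bil F}"
  show "(\<lambda>c b. x c b + y c b) \<in> {F. bil F}" using bil_add x y by simp
  show "(\<lambda>c b. x c b + y c b) = (\<lambda>c b. y c b + x c b)" by (simp add: add.commute)
  show "onrm (\<lambda>c b. x c b + y c b) \<le> onrm x + onrm y" using onrm_tri x y by simp
  fix z :: complex
  show "(\<lambda>c b. z * (x c b + y c b)) = (\<lambda>c b. z * x c b + z * y c b)" by (simp add: algebra_simps)
next
  fix x y w :: "'c \<Rightarrow> 'b \<Rightarrow> complex"
  show "(\<lambda>c b. x c b + y c b + w c b) = (\<lambda>c b. x c b + (y c b + w c b))" by (simp add: add.assoc)
next
  fix z :: complex and x :: "'c \<Rightarrow> 'b \<Rightarrow> complex" assume x: "x \<in> {F. bil F}"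
  show "(\<lambda>c b. z * x c b) \<in> {F. bil F}" using bil_sm x by simp
  show "onrm (\<lambda>c b. z * x c b) = cmod z * onrm x" using onrm_sm x by simp
next
  fix x :: "'c \<Rightarrow> 'b \<Rightarrow> complex"
  show "(\<lambda>c b. 0 + x c b) = x" by simp
  show "(\<lambda>c b. 1 * x c b) = x" by simp
next
  fix x :: "'c \<Rightarrow> 'b \<Rightarrow> complex" assume x: "x \<in> {F. bil F}"
  show "\<exists>y\<in>{F. bil F}. (\<lambda>c b. x c b + y c b) = (\<lambda>c b. 0)"
    using bil_sm[of x "-1"] x by (intro bexI[where x="\<lambda>c b. -1 * x c b"]) auto
  show "(onrm x = 0) = (x = (\<lambda>c b. 0))" using onrm_zero_iff x by simp
next
  fix z w :: complex and x :: "'c \<Rightarrow> 'b \<Rightarrow> complex"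
  show "(\<lambda>c b. (z + w) * x c b) = (\<lambda>c b. z * x c b + w * x c b)" by (simp add: algebra_simps)
  show "(\<lambda>c b. z * (w * x c b)) = (\<lambda>c b. z * w * x c b)" by (simp add: algebra_simps)
next
  fix s :: "nat \<Rightarrow> 'c \<Rightarrow> 'b \<Rightarrow> complex"
  assume s: "\<forall>n. s n \<in> {F. bil F}"
    and C: "\<forall>e>0. \<exists>N. \<forall>m\<ge>N. \<forall>n\<ge>N. onrm (\<lambda>c b. s m c b + -1 * s n c b) < e"
  show "\<exists>l\<in>{F. bil F}. \<forall>e>0. \<exists>N. \<forall>n\<ge>N. onrm (\<lambda>c b. s n c b + -1 * l c b) < e"
    using bil_complete[of s] s C by simp
qed



lemma onrm_lr:
  fixes F :: "'c::complex_banach_algebra_1 \<Rightarrow> 'b::complex_banach_algebra_1 \<Rightarrow> complex"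
  assumes F: "bil F"
  shows "onrm (\<lambda>c b. F (c' * c) (b * b')) \<le> norm b' * onrm F * norm c'"
proof (rule onrm_le)
  fix c b
  have "cmod (F (c' * c) (b * b')) \<le> onrm F * norm (c' * c) * norm (b * b')" using onrm_bound[OF F] .
  also have "\<dots> \<le> onrm F * (norm c' * norm c) * (norm b * norm b')"
    by (intro mult_mono mult_left_mono norm_mult_ineq) (simp_all add: onrm_nonneg[OF F])
  finally show "cmod (F (c' * c) (b * b')) \<le> norm b' * onrm F * norm c' * norm c * norm b"
    by (simp add: algebra_simps)
qed (simp add: onrm_nonneg[OF F])

lemma onrm_l:
  fixes F :: "'c::complex_banach_algebra_1 \<Rightarrow> 'b::complex_banach_algebra_1 \<Rightarrow> complex"
  assumes F: "bil F"
  shows "onrm (\<lambda>c b. F c (b * b')) \<le> norm b' * onrm F"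
  using onrm_lr[OF F, of 1 b'] by simp

lemma onrm_r:
  fixes F :: "'c::complex_banach_algebra_1 \<Rightarrow> 'b::complex_banach_algebra_1 \<Rightarrow> complex"
  assumes F: "bil F"
  shows "onrm (\<lambda>c b. F (c' * c) b) \<le> onrm F * norm c'"
  using onrm_lr[OF F, of c' 1] by (simp add: mult.commute)

lemma bilM_ubb: "unital_banach_bimodule (bilM :: ('b::complex_banach_algebra_1, 'c::complex_banach_algebra_1, 'c \<Rightarrow> 'b \<Rightarrow> complex) bimod)"
  unfolding unital_banach_bimodule_def Let_def
  apply (intro conjI bilM_cbs)
  unfolding bilM_simps
                    apply (auto simp: bil_l bil_r onrm_lr onrm_lr[simplified mult.assoc] onrm_l onrm_r bil_addL bil_addR bil_scL bil_scR
      distrib_left distrib_right mult_scaleC_left mult_scaleC_right mult.assoc intro!: ext)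
  done



lemma partA:
  fixes \<phi> :: "'a::complex_banach_algebra_1 \<Rightarrow> 'b::complex_banach_algebra_1"
    and \<psi> :: "'a \<Rightarrow> 'c::complex_banach_algebra_1"
  assumes ii: "cond_ii \<phi> \<psi>"
  shows "cond_i \<phi> \<psi> TYPE('x)"
  unfolding cond_i_def
proof (intro allI impI)
  fix M :: "('b, 'c, 'x) bimod" and \<delta> :: "'a \<Rightarrow> 'x"
  assume U: "unital_banach_bimodule M" and D: "bounded_linear_into M \<delta>"
    and J: "jordan_derivation M \<phi> \<psi> \<delta>"
  have cb: "complex_banach_space M" using U unfolding unital_banach_bimodule_def by blast
  interpret cbs M using cb by (simp add: cbs_def)
  let ?X = "bm_carrier M" and ?ad = "bm_add M" and ?sm = "bm_smul M" and ?nm = "bm_norm M"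
    and ?l = "bm_lact M" and ?r = "bm_ract M"
  note Uu = U[unfolded unital_banach_bimodule_def Let_def]
  have lX: "\<And>b x. x \<in> ?X \<Longrightarrow> ?l b x \<in> ?X" using Uu by (elim conjE) metis
  have rX: "\<And>c x. x \<in> ?X \<Longrightarrow> ?r x c \<in> ?X" using Uu by (elim conjE) metis
  have l_ad: "\<And>b x y. x \<in> ?X \<Longrightarrow> y \<in> ?X \<Longrightarrow> ?l b (?ad x y) = ?ad (?l b x) (?l b y)" using Uu by (elim conjE) metis
  have l_add: "\<And>b b' x. x \<in> ?X \<Longrightarrow> ?l (b + b') x = ?ad (?l b x) (?l b' x)" using Uu by (elim conjE) metis
  have l_sc: "\<And>z b x. x \<in> ?X \<Longrightarrow> ?l (scaleC z b) x = ?sm z (?l b x)" using Uu by (elim conjE) metis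
  have l_sm: "\<And>z b x. x \<in> ?X \<Longrightarrow> ?l b (?sm z x) = ?sm z (?l b x)" using Uu by (elim conjE) metis
  have l_mult: "\<And>b b' x. x \<in> ?X \<Longrightarrow> ?l (b * b') x = ?l b (?l b' x)" using Uu by (elim conjE) metis
  have l_one: "\<And>x. x \<in> ?X \<Longrightarrow> ?l 1 x = x" using Uu by (elim conjE) metis
  have r_ad: "\<And>c x y. x \<in> ?X \<Longrightarrow> y \<in> ?X \<Longrightarrow> ?r (?ad x y) c = ?ad (?r x c) (?r y c)" using Uu by (elim conjE) metis
  have r_add: "\<And>c c' x. x \<in> ?X \<Longrightarrow> ?r x (c + c') = ?ad (?r x c) (?r x c')" using Uu by (elim conjE) metis
  have r_sc: "\<And>z c x. x \<in> ?X \<Longrightarrow> ?r x (scaleC z c) = ?sm z (?r x c)" using Uu by (elim conjE) metis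
  have r_sm: "\<And>z c x. x \<in> ?X \<Longrightarrow> ?r (?sm z x) c = ?sm z (?r x c)" using Uu by (elim conjE) metis
  have r_mult: "\<And>c c' x. x \<in> ?X \<Longrightarrow> ?r x (c * c') = ?r (?r x c) c'" using Uu by (elim conjE) metis
  have r_one: "\<And>x. x \<in> ?X \<Longrightarrow> ?r x 1 = x" using Uu by (elim conjE) metis
  have lr: "\<And>b c x. x \<in> ?X \<Longrightarrow> ?l b (?r x c) = ?r (?l b x) c" using Uu by (elim conjE) metis
  have nm_lr: "\<And>b c x. x \<in> ?X \<Longrightarrow> ?nm (?l b (?r x c)) \<le> norm b * ?nm x * norm c" using Uu by (elim conjE) metis
  note Dd = D[unfolded bounded_linear_into_def]
  have dX: "\<And>a. \<delta> a \<in> ?X" using Dd by blast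
  have d_add: "\<And>a a'. \<delta> (a + a') = ?ad (\<delta> a) (\<delta> a')" using Dd by blast
  have d_sc: "\<And>z a. \<delta> (scaleC z a) = ?sm z (\<delta> a)" using Dd by blast
  obtain K where K: "\<And>a. ?nm (\<delta> a) \<le> K * norm a" using Dd by blast
  have Jd: "\<And>a. \<delta> (a * a) = ?ad (?l (\<phi> a) (\<delta> a)) (?r (\<delta> a) (\<psi> a))"
    using J unfolding jordan_derivation_def by blast
  show "derivation M \<phi> \<psi> \<delta>" unfolding derivation_def
  proof (intro allI)
    fix a d
    have u: "\<delta> (a * d) \<in> ?X" by (rule dX)
    have v: "?ad (?r (\<delta> a) (\<psi> d)) (?l (\<phi> a) (\<delta> d)) \<in> ?X" using adX rX lX dX by blast
    show "\<delta> (a * d) = ?ad (?r (\<delta> a) (\<psi> d)) (?l (\<phi> a) (\<delta> d))"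
    proof (rule separate[OF u v])
      fix f
      assume fa: "\<forall>x\<in>?X. \<forall>y\<in>?X. f (?ad x y) = f x + f y"
        and fh: "\<forall>z. \<forall>x\<in>?X. f (?sm z x) = z * f x"
        and fb: "\<forall>x\<in>?X. cmod (f x) \<le> 2 * ?nm x"
      define V where "V a c b = f (?l b (?r (\<delta> a) c))" for a c b
      have rdX: "\<And>a c. ?r (\<delta> a) c \<in> ?X" using rX dX by blast
      have T: "bounded_trilinear_form V" unfolding bounded_trilinear_form_def
      proof (intro conjI allI)
        fix a a' c b show "V (a + a') c b = V a c b + V a' c b"
          unfolding V_def d_add using r_ad l_ad fa dX rdX lX by simp
      next
        fix z a c b show "V (scaleC z a) c b = z * V a c b"
          unfolding V_def d_sc using r_sm l_sm fh dX rdX lX by simp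
      next
        fix a c c' b show "V a (c + c') b = V a c b + V a c' b"
          unfolding V_def using r_add l_ad fa dX rdX lX by simp
      next
        fix z a c b show "V a (scaleC z c) b = z * V a c b"
          unfolding V_def using r_sc l_sm fh dX rdX lX by simp
      next
        fix a c b b' show "V a c (b + b') = V a c b + V a c b'"
          unfolding V_def using l_add fa rdX lX by simp
      next
        fix z a c b show "V a c (scaleC z b) = z * V a c b"
          unfolding V_def using l_sc fh rdX lX by simp
      next
        have "cmod (V a c b) \<le> (2 * K) * norm a * norm c * norm b" for a c b
        proof -
          have "cmod (V a c b) \<le> 2 * ?nm (?l b (?r (\<delta> a) c))" unfolding V_def using fb lX rdX by blast
          also have "\<dots> \<le> 2 * (norm b * ?nm (\<delta> a) * norm c)" using nm_lr[OF dX] by simp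
          also have "\<dots> \<le> 2 * (norm b * (K * norm a) * norm c)"
            using K[of a] by (intro mult_left_mono mult_right_mono) auto
          finally show ?thesis by (simp add: algebra_simps)
        qed
        thus "\<exists>K. \<forall>a c b. cmod (V a c b) \<le> K * norm a * norm c * norm b" by blast
      qed
      have JV: "\<forall>a b c. V (a * a) c b = V a (\<psi> a * c) b + V a c (b * \<phi> a)"
      proof (intro allI)
        fix a b c
        have "V (a * a) c b = f (?l b (?r (?l (\<phi> a) (\<delta> a)) c)) + f (?l b (?r (?r (\<delta> a) (\<psi> a)) c))"
          unfolding V_def Jd using r_ad l_ad fa lX rX dX by simp
        also have "?l b (?r (?l (\<phi> a) (\<delta> a)) c) = ?l (b * \<phi> a) (?r (\<delta> a) c)"
          by (simp only: lr[OF dX, symmetric] l_mult[OF rdX])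
        also have "?l b (?r (?r (\<delta> a) (\<psi> a)) c) = ?l b (?r (\<delta> a) (\<psi> a * c))"
          using r_mult dX by simp
        finally show "V (a * a) c b = V a (\<psi> a * c) b + V a c (b * \<phi> a)"
          unfolding V_def by simp
      qed
      have "V (a * d) 1 1 = V a (\<psi> d * 1) 1 + V d 1 (1 * \<phi> a)"
        using ii T JV unfolding cond_ii_def by blast
      hence "f (\<delta> (a * d)) = f (?r (\<delta> a) (\<psi> d)) + f (?l (\<phi> a) (\<delta> d))"
        unfolding V_def using l_one r_one dX rdX lX by simp
      also have "\<dots> = f (?ad (?r (\<delta> a) (\<psi> d)) (?l (\<phi> a) (\<delta> d)))" using fa rdX lX dX by simp
      finally show "f (\<delta> (a * d)) = f (?ad (?r (\<delta> a) (\<psi> d)) (?l (\<phi> a) (\<delta> d)))" .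
    qed
  qed
qed



lemma partB:
  fixes \<phi> :: "'a::complex_banach_algebra_1 \<Rightarrow> 'b::complex_banach_algebra_1"
    and \<psi> :: "'a \<Rightarrow> 'c::complex_banach_algebra_1"
  assumes i: "cond_i \<phi> \<psi> TYPE('c \<Rightarrow> 'b \<Rightarrow> complex)"
  shows "cond_ii \<phi> \<psi>"
  unfolding cond_ii_def
proof (intro allI impI)
  fix V :: "'a \<Rightarrow> 'c \<Rightarrow> 'b \<Rightarrow> complex"
  assume T: "bounded_trilinear_form V"
    and Jh: "\<forall>a b c. V (a * a) c b = V a (\<psi> a * c) b + V a c (b * \<phi> a)"
  note Tt = T[unfolded bounded_trilinear_form_def]
  have Va: "\<And>a a' c b. V (a + a') c b = V a c b + V a' c b" using Tt by (elim conjE) metis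
  have Vaz: "\<And>z a c b. V (scaleC z a) c b = z * V a c b" using Tt by (elim conjE) metis
  have Vc: "\<And>a c c' b. V a (c + c') b = V a c b + V a c' b" using Tt by (elim conjE) metis
  have Vcz: "\<And>z a c b. V a (scaleC z c) b = z * V a c b" using Tt by (elim conjE) metis
  have Vb: "\<And>a c b b'. V a c (b + b') = V a c b + V a c b'" using Tt by (elim conjE) metis
  have Vbz: "\<And>z a c b. V a c (scaleC z b) = z * V a c b" using Tt by (elim conjE) metis
  obtain K where K: "\<And>a c b. cmod (V a c b) \<le> K * norm a * norm c * norm b" using Tt by (elim conjE) metis
  define \<delta> where "\<delta> a = (\<lambda>c b. V a c b)" for a
  have K0: "cmod (V a c b) \<le> (max K 0 * norm a) * norm c * norm b" for a c b
  proof -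
    have "K * norm a * norm c * norm b \<le> max K 0 * norm a * norm c * norm b"
      by (intro mult_right_mono) auto
    thus ?thesis using K[of a c b] by (simp add: mult.assoc)
  qed
  have dbil: "bil (\<delta> a)" for a
    unfolding \<delta>_def by (rule bilI[where K="max K 0 * norm a"]) (auto simp: Vc Vcz Vb Vbz K0)
  have U: "unital_banach_bimodule (bilM :: ('b, 'c, 'c \<Rightarrow> 'b \<Rightarrow> complex) bimod)" by (rule bilM_ubb)
  have D: "bounded_linear_into (bilM :: ('b, 'c, 'c \<Rightarrow> 'b \<Rightarrow> complex) bimod) \<delta>"
    unfolding bounded_linear_into_def bilM_simps
  proof (intro conjI allI)
    fix a show "\<delta> a \<in> {F. bil F}" using dbil by simp
  next
    fix a a' show "\<delta> (a + a') = (\<lambda>c b. \<delta> a c b + \<delta> a' c b)" unfolding \<delta>_def by (intro ext) (simp add: Va)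
  next
    fix z a show "\<delta> (scaleC z a) = (\<lambda>c b. z * \<delta> a c b)" unfolding \<delta>_def by (intro ext) (simp add: Vaz)
  next
    have "onrm (\<delta> a) \<le> max K 0 * norm a" for a
      by (rule onrm_le) (auto simp: \<delta>_def K0)
    thus "\<exists>K. \<forall>a. onrm (\<delta> a) \<le> K * norm a" by blast
  qed
  have J: "jordan_derivation (bilM :: ('b, 'c, 'c \<Rightarrow> 'b \<Rightarrow> complex) bimod) \<phi> \<psi> \<delta>"
    unfolding jordan_derivation_def bilM_simps \<delta>_def using Jh by (auto intro!: ext simp: add.commute)
  have "derivation (bilM :: ('b, 'c, 'c \<Rightarrow> 'b \<Rightarrow> complex) bimod) \<phi> \<psi> \<delta>"
    using i U D J unfolding cond_i_def by blast
  hence E: "\<And>a d. (\<lambda>c b. V (a * d) c b) = (\<lambda>c b. V a (\<psi> d * c) b + V d c (b * \<phi> a))"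
    unfolding derivation_def bilM_simps \<delta>_def by simp
  fix a d b c
  show "V (a * d) c b = V a (\<psi> d * c) b + V d c (b * \<phi> a)" using fun_cong[OF fun_cong[OF E[of a d], of c], of b] by simp
qed


theorem lemma3p2:
  fixes \<phi> :: "'a::complex_banach_algebra_1 \<Rightarrow> 'b::complex_banach_algebra_1"
    and \<psi> :: "'a \<Rightarrow> 'c::complex_banach_algebra_1"
  assumes "alg_hom \<phi>" and "alg_hom \<psi>"
  shows "(cond_ii \<phi> \<psi> \<longrightarrow> cond_i \<phi> \<psi> TYPE('x))
       \<and> (cond_i \<phi> \<psi> TYPE('c \<Rightarrow> 'b \<Rightarrow> complex) \<longrightarrow> cond_ii \<phi> \<psi>)"
  using partA[of \<phi> \<psi>] partB[of \<phi> \<psi>] by blast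

end
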